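(* Let $D$ be a Newton diagram in $2$ variables whose support $K$ has size $d$, is connected, and contains $(0,0)$. Let $k<d$ and suppose $K$ contains all $m\in\mathbb N_0^2$ with $|m|\le k-1$. Then there is an extension $D'$ of $D$ with $\#(D')\le\#(D)$ whose support contains all $m\in\mathbb N_0^2$ with $|m|\le k$.
   Context: For $m\in\mathbb Z^n$ write $|m|=m_1+\dots+m_n$; $e_1,\dots,e_n$ is the standard basis. A Newton diagram in $n$ variables is a function $D\colon\mathbb Z^n\to\{0,P,N\}$ ($P,N$ formal symbols) whose support $K=D^{-1}(\{P,N\})$ is a finite nonempty subset of $\mathbb N_0^n$. For $a\in\mathbb Z^n$ let $E(a)=\{a,a-e_1,\dots,a-e_n\}$; $E(a)$ is a node of $D$ if the image $D(E(a))$ equals $\{P\}$, $\{N\}$, $\{0,P\}$ or $\{0,N\}$. $\#(D)$ is the number of $a\in\mathbb Z^n$ for which $E(a)$ is a node. Two distinct points $m,m'$ are adjacent if $m-m'\in\{\pm e_j\}\cup\{e_j-e_k: j\ne k\}$; $K$ is connected if any two points of $K$ are joined by a path of successively adjacent points of $K$. The size of $K$ is $k-|a|+1$ where $k=\max_{m\in K}|m|$ and $a_j=\min_{m\in K}m_j$. A Newton diagram $D'$ with support $K'$ is an extension of $D$ if $K\subset K'$ and $D'|_K=D|_K$. *)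

theory Defs
  imports Main
begin

datatype sgn = Zero | P | N

type_synonym diagram = "int \<times> int \<Rightarrow> sgn"

definition supp :: "diagram \<Rightarrow> (int \<times> int) set" where
  "supp D = {m. D m \<noteq> Zero}"

definition newton_diagram :: "diagram \<Rightarrow> bool" where
  "newton_diagram D \<longleftrightarrow> finite (supp D) \<and> supp D \<noteq> {} \<and>
     (\<forall>m \<in> supp D. fst m \<ge> 0 \<and> snd m \<ge> 0)"

definition absm :: "int \<times> int \<Rightarrow> int" where
  "absm m = fst m + snd m"

definition Eset :: "int \<times> int \<Rightarrow> (int \<times> int) set" where
  "Eset a = {a, (fst a - 1, snd a), (fst a, snd a - 1)}"

definition is_node :: "diagram \<Rightarrow> int \<times> int \<Rightarrow> bool" where
  "is_node D a \<longleftrightarrow> D ` Eset a \<in> {{P}, {N}, {Zero, P}, {Zero, N}}"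

definition num_nodes :: "diagram \<Rightarrow> nat" where
  "num_nodes D = card {a. is_node D a}"

definition adjacent :: "int \<times> int \<Rightarrow> int \<times> int \<Rightarrow> bool" where
  "adjacent m m' \<longleftrightarrow> m \<noteq> m' \<and>
     (fst m - fst m', snd m - snd m') \<in> {(1,0), (-1,0), (0,1), (0,-1), (1,-1), (-1,1)}"

definition connected_set :: "(int \<times> int) set \<Rightarrow> bool" where
  "connected_set K \<longleftrightarrow> (\<forall>m \<in> K. \<forall>m' \<in> K.
     (\<lambda>x y. x \<in> K \<and> y \<in> K \<and> adjacent x y)\<^sup>*\<^sup>* m m')"

definition size_of :: "(int \<times> int) set \<Rightarrow> int" where
  "size_of K = Max (absm ` K) - (Min (fst ` K) + Min (snd ` K)) + 1"

definition extension :: "diagram \<Rightarrow> diagram \<Rightarrow> bool" where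
  "extension D' D \<longleftrightarrow> newton_diagram D' \<and> supp D \<subseteq> supp D' \<and>
     (\<forall>m \<in> supp D. D' m = D m)"

end

theory Submission
  imports Defs
begin

fun ng :: "sgn \<Rightarrow> sgn" where
  "ng P = N" | "ng N = P" | "ng Zero = Zero"

lemma ng_ng[simp]: "ng (ng x) = x" by (cases x) auto

definition node3 :: "sgn \<Rightarrow> sgn \<Rightarrow> sgn \<Rightarrow> bool" where
  "node3 x y z \<longleftrightarrow> (P \<in> {x,y,z} \<and> N \<notin> {x,y,z}) \<or> (N \<in> {x,y,z} \<and> P \<notin> {x,y,z})"

lemma sgn_all: "\<forall>x::sgn. x = Zero \<or> x = P \<or> x = N"
  by (rule allI, case_tac x, auto)

lemma set_node_iff:
  "(S::sgn set) \<in> {{P}, {N}, {Zero, P}, {Zero, N}} \<longleftrightarrow> (P \<in> S \<and> N \<notin> S) \<or> (N \<in> S \<and> P \<notin> S)"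
proof
  assume "S \<in> {{P}, {N}, {Zero, P}, {Zero, N}}"
  then show "(P \<in> S \<and> N \<notin> S) \<or> (N \<in> S \<and> P \<notin> S)" by auto
next
  assume h: "(P \<in> S \<and> N \<notin> S) \<or> (N \<in> S \<and> P \<notin> S)"
  show "S \<in> {{P}, {N}, {Zero, P}, {Zero, N}}"
  proof -
  have mem: "\<And>x. x \<in> S \<Longrightarrow> x = Zero \<or> x = P \<or> x = N" using sgn_all by blast
  show ?thesis
  proof (cases "Zero \<in> S")
    case True
    show ?thesis using h
    proof (elim disjE)
      assume "P \<in> S \<and> N \<notin> S"
      then have "S = {Zero, P}" using True mem by blast
      then show ?thesis by simp
    next
      assume "N \<in> S \<and> P \<notin> S"
      then have "S = {Zero, N}" using True mem by blast
      then show ?thesis by simp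
    qed
  next
    case False
    show ?thesis using h
    proof (elim disjE)
      assume "P \<in> S \<and> N \<notin> S"
      then have "S = {P}" using False mem by blast
      then show ?thesis by simp
    next
      assume "N \<in> S \<and> P \<notin> S"
      then have "S = {N}" using False mem by blast
      then show ?thesis by simp
    qed
  qed
  qed
qed

lemma is_node_iff:
  "is_node G a \<longleftrightarrow> node3 (G a) (G (fst a - 1, snd a)) (G (fst a, snd a - 1))"
  unfolding is_node_def Eset_def set_node_iff node3_def by simp

lemma node3_mono:
  assumes "node3 x' y' z'" "x \<noteq> Zero \<Longrightarrow> x' = x" "y \<noteq> Zero \<Longrightarrow> y' = y" "z \<noteq> Zero \<Longrightarrow> z' = z"
  shows "node3 x y z \<or> (x = Zero \<and> y = Zero \<and> z = Zero)"
  using assms by (cases x; cases y; cases z; cases x'; cases y'; cases z') (auto simp: node3_def)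

lemma notnode_ng: "v \<noteq> Zero \<Longrightarrow> \<not> node3 u v (ng v)"
  by (cases v; cases u) (auto simp: node3_def)

lemma node_nz: "is_node G a \<Longrightarrow> G a \<noteq> Zero \<or> G (fst a - 1, snd a) \<noteq> Zero \<or> G (fst a, snd a - 1) \<noteq> Zero"
  by (auto simp: is_node_iff node3_def)

lemma finite_nodes:
  assumes "finite (supp G)" shows "finite {a. is_node G a}"
proof (rule finite_subset)
  show "{a. is_node G a} \<subseteq> supp G \<union> (\<lambda>m. (fst m+1, snd m))`supp G \<union> (\<lambda>m. (fst m, snd m +1))`supp G"
  proof
    fix a assume "a \<in> {a. is_node G a}"
    then have "G a \<noteq> Zero \<or> G (fst a - 1, snd a) \<noteq> Zero \<or> G (fst a, snd a - 1) \<noteq> Zero" using node_nz by blast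
    then show "a \<in> supp G \<union> (\<lambda>m. (fst m+1, snd m))`supp G \<union> (\<lambda>m. (fst m, snd m +1))`supp G"
      apply (elim disjE)
        apply (simp add: supp_def)
       apply (rule UnI1, rule UnI2, rule rev_image_eqI[of "(fst a - 1, snd a)"]; simp add: supp_def)
      apply (rule UnI2, rule rev_image_eqI[of "(fst a, snd a - 1)"]; simp add: supp_def)
      done
  qed
  show "finite (supp G \<union> (\<lambda>m. (fst m+1, snd m))`supp G \<union> (\<lambda>m. (fst m, snd m +1))`supp G)"
    using assms by simp
qed

definition Lft :: "diagram \<Rightarrow> nat \<Rightarrow> int \<Rightarrow> bool" where
  "Lft D k i \<longleftrightarrow> (\<forall>i'. 0 \<le> i' \<and> i' < i \<longrightarrow> D (i', int k - i') = Zero)"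

definition fillv :: "diagram \<Rightarrow> nat \<Rightarrow> int \<Rightarrow> sgn" where
  "fillv D k i = (if Lft D k i then (if even i then ng (D (0, int k - 1)) else D (0, int k - 1))
       else (if even (int k - i) then ng (D (int k - 1, 0)) else D (int k - 1, 0)))"

definition Dx :: "diagram \<Rightarrow> nat \<Rightarrow> diagram" where
  "Dx D k m = (if D m \<noteq> Zero then D m else if 0 \<le> fst m \<and> 0 \<le> snd m \<and> absm m = int k then fillv D k (fst m) else Zero)"

lemma Lft_succ:
  assumes "0 \<le> i" "D (i, int k - i) = Zero"
  shows "Lft D k (i+1) \<longleftrightarrow> Lft D k i"
proof
  assume "Lft D k (i+1)" thus "Lft D k i" by (auto simp: Lft_def)
next
  assume L: "Lft D k i"
  show "Lft D k (i+1)" unfolding Lft_def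
  proof (intro allI impI)
    fix i' assume h: "0 \<le> i' \<and> i' < i + 1"
    show "D (i', int k - i') = Zero"
    proof (cases "i' = i")
      case True thus ?thesis using assms by simp
    next
      case False thus ?thesis using L h by (auto simp: Lft_def)
    qed
  qed
qed

lemma fill_succ:
  assumes "0 \<le> i" "D (i, int k - i) = Zero"
  shows "fillv D k (i+1) = ng (fillv D k i)"
proof -
  have "even (int k - (i+1)) \<longleftrightarrow> \<not> even (int k - i)" by (simp add: algebra_simps)
  then show ?thesis using Lft_succ[of i D k, OF assms] by (auto simp: fillv_def)
qed

lemma layer_exists:
  assumes nd: "newton_diagram D" and sz: "size_of (supp D) = d" and con: "connected_set (supp D)"
    and z: "(0,0) \<in> supp D" and kd: "int k < d"
  shows "\<exists>i. 0 \<le> i \<and> i \<le> int k \<and> D (i, int k - i) \<noteq> Zero"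
proof -
  let ?K = "supp D"
  have fin: "finite ?K" and nonneg: "\<forall>m\<in>?K. fst m \<ge> 0 \<and> snd m \<ge> 0"
    using nd by (auto simp: newton_diagram_def)
  have m1: "Min (fst ` ?K) = 0"
  proof (rule Min_eqI)
    show "finite (fst ` ?K)" using fin by simp
    show "\<And>y. y \<in> fst ` ?K \<Longrightarrow> 0 \<le> y" using nonneg by auto
    show "0 \<in> fst ` ?K" using z by (force intro: rev_image_eqI)
  qed
  have m2: "Min (snd ` ?K) = 0"
  proof (rule Min_eqI)
    show "finite (snd ` ?K)" using fin by simp
    show "\<And>y. y \<in> snd ` ?K \<Longrightarrow> 0 \<le> y" using nonneg by auto
    show "0 \<in> snd ` ?K" using z by (force intro: rev_image_eqI)
  qed
  have "Max (absm ` ?K) \<ge> int k" using sz kd m1 m2 by (simp add: size_of_def)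
  moreover have "Max (absm ` ?K) \<in> absm ` ?K" using fin z by (intro Max_in) auto
  ultimately obtain m where mK: "m \<in> ?K" and mk: "absm m \<ge> int k" by force
  have path: "(\<lambda>x y. x \<in> ?K \<and> y \<in> ?K \<and> adjacent x y)\<^sup>*\<^sup>* (0,0) m"
    using con z mK by (simp add: connected_set_def)
  have gen: "absm q \<ge> int k \<longrightarrow> (\<exists>p \<in> ?K. absm p = int k)"
    if "(\<lambda>x y. x \<in> ?K \<and> y \<in> ?K \<and> adjacent x y)\<^sup>*\<^sup>* (0,0) q" for q
    using that
  proof (induction rule: rtranclp_induct)
    case base
    show ?case
    proof
      assume "int k \<le> absm (0::int, 0::int)"
      then have "k = 0" by (simp add: absm_def)
      then show "\<exists>p \<in> ?K. absm p = int k" using z by (auto simp: absm_def intro!: bexI[of _ "(0,0)"])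
    qed
  next
    case (step y q)
    show ?case
    proof
      assume qk: "int k \<le> absm q"
      show "\<exists>p \<in> ?K. absm p = int k"
      proof (cases "int k \<le> absm y")
        case True thus ?thesis using step.IH by blast
      next
        case False
        have "absm q \<le> absm y + 1" using step.hyps(2) by (auto simp: adjacent_def absm_def)
        then have "absm q = int k" using False qk by linarith
        then show ?thesis using step.hyps(2) by blast
      qed
    qed
  qed
  obtain p where pK: "p \<in> ?K" and pk: "absm p = int k" using gen[OF path] mk by blast
  have "p = (fst p, int k - fst p)" using pk by (cases p) (auto simp: absm_def)
  moreover have "0 \<le> fst p" "0 \<le> snd p" using pK nonneg by auto
  ultimately show ?thesis using pK pk by (intro exI[of _ "fst p"]) (auto simp: supp_def absm_def)
qed

context
  fixes D :: diagram and k :: nat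
  assumes nd: "newton_diagram D" and k1: "1 \<le> k"
    and lay: "\<forall>m. fst m \<ge> 0 \<and> snd m \<ge> 0 \<and> absm m \<le> int k - 1 \<longrightarrow> m \<in> supp D"
    and ex: "\<exists>i. 0 \<le> i \<and> i \<le> int k \<and> D (i, int k - i) \<noteq> Zero"
begin

lemma s0: "D (0, int k - 1) \<noteq> Zero"
  using lay[rule_format, of "(0, int k - 1)"] k1 by (auto simp: supp_def absm_def)

lemma sk: "D (int k - 1, 0) \<noteq> Zero"
  using lay[rule_format, of "(int k - 1, 0)"] k1 by (auto simp: supp_def absm_def)

lemma ng_nz: "x \<noteq> Zero \<Longrightarrow> ng x \<noteq> Zero" by (cases x) auto

lemma fill_nz: "fillv D k i \<noteq> Zero"
  using s0 sk ng_nz[OF s0] ng_nz[OF sk] by (auto simp: fillv_def)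

lemma nonneg_D: "D m \<noteq> Zero \<Longrightarrow> 0 \<le> fst m \<and> 0 \<le> snd m"
  using nd by (cases m) (auto simp: newton_diagram_def supp_def)

lemma fsuppDx: "finite (supp (Dx D k))"
proof (rule finite_subset)
  show "supp (Dx D k) \<subseteq> supp D \<union> ({0..int k} \<times> {0..int k})"
    by (auto simp: Dx_def supp_def absm_def split: if_splits)
  show "finite (supp D \<union> ({0..int k} \<times> {0..int k}))" using nd by (simp add: newton_diagram_def)
qed

lemma key:
  assumes B: "is_node (Dx D k) a" and nA: "\<not> is_node D a"
  shows "(a = (0, int k + 1) \<and> D (0, int k) = Zero) \<or> (a = (int k + 1, 0) \<and> D (int k, 0) = Zero)"
proof -
  obtain x y where a: "a = (x,y)" by (cases a)
  let ?D' = "Dx D k"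
  have n3: "node3 (?D' (x,y)) (?D' (x-1,y)) (?D' (x,y-1))" using B a by (simp add: is_node_iff)
  have nn3: "\<not> node3 (D (x,y)) (D (x-1,y)) (D (x,y-1))" using nA a by (simp add: is_node_iff)
  have agree: "\<And>m. D m \<noteq> Zero \<Longrightarrow> ?D' m = D m" by (simp add: Dx_def)
  have z: "D (x,y) = Zero \<and> D (x-1,y) = Zero \<and> D (x,y-1) = Zero"
    using node3_mono[OF n3 agree agree agree] nn3 by blast
  have dv: "\<And>p. D p = Zero \<Longrightarrow> ?D' p = (if 0 \<le> fst p \<and> 0 \<le> snd p \<and> absm p = int k then fillv D k (fst p) else Zero)"
    by (simp add: Dx_def)
  have lay3: "(0\<le>x \<and> 0\<le>y \<and> x+y = int k) \<or> (0 \<le> x-1 \<and> 0 \<le> y \<and> x-1+y = int k) \<or> (0\<le>x \<and> 0 \<le> y-1 \<and> x+(y-1) = int k)"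
  proof (rule ccontr)
    assume h: "\<not> ?thesis"
    have "?D' (x,y) = Zero" "?D' (x-1,y) = Zero" "?D' (x,y-1) = Zero"
      using h dv z by (auto simp: absm_def)
    then show False using n3 by (simp add: node3_def)
  qed
  have notk: "\<not> (0\<le>x \<and> 0\<le>y \<and> x+y = int k)"
  proof
    assume h: "0\<le>x \<and> 0\<le>y \<and> x+y = int k"
    then have "x \<ge> 1 \<or> y \<ge> 1" using k1 by linarith
    then show False
    proof
      assume "x \<ge> 1"
      then have "(x-1,y) \<in> supp D" using lay h by (auto simp: absm_def)
      then show False using z by (simp add: supp_def)
    next
      assume "y \<ge> 1"
      then have "(x,y-1) \<in> supp D" using lay h by (auto simp: absm_def)
      then show False using z by (simp add: supp_def)
    qed
  qed
  hence xy: "0 \<le> x \<and> 0 \<le> y \<and> x + y = int k + 1" using lay3 by linarith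
  have not_both: "\<not> (1 \<le> x \<and> 1 \<le> y)"
  proof
    assume h: "1 \<le> x \<and> 1 \<le> y"
    have e1: "?D' (x-1,y) = fillv D k (x-1)" using dv z h xy by (simp add: absm_def)
    have e2: "?D' (x,y-1) = fillv D k x" using dv z h xy by (simp add: absm_def)
    have yy: "int k - (x-1) = y" using xy by linarith
    have "fillv D k (x-1+1) = ng (fillv D k (x-1))" using fill_succ[of "x-1" D k] h z yy by simp
    then have "fillv D k x = ng (fillv D k (x-1))" by simp
    then show False using n3 e1 e2 notnode_ng[OF fill_nz[of "x-1"]] by simp
  qed
  show ?thesis
  proof (cases "x = 0")
    case True
    then have "y = int k + 1" using xy by simp
    then show ?thesis using True z a by simp
  next
    case False
    then have "y = 0" "x = int k + 1" using xy not_both by auto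
    then show ?thesis using z a by simp
  qed
qed

lemma compL:
  assumes "D (0, int k) = Zero"
  shows "is_node D (0, int k) \<and> \<not> is_node (Dx D k) (0, int k)"
proof
  have m: "D (-1, int k) = Zero" using nonneg_D[of "(-1, int k)"] by auto
  show "is_node D (0, int k)" using assms m s0 by (cases "D (0, int k - 1)") (auto simp: is_node_iff node3_def)
  have a1: "Dx D k (0, int k) = ng (D (0, int k - 1))"
    using assms by (auto simp: Dx_def absm_def fillv_def Lft_def)
  have a2: "Dx D k (-1, int k) = Zero" using m by (simp add: Dx_def)
  have a3: "Dx D k (0, int k - 1) = D (0, int k - 1)" using s0 by (simp add: Dx_def)
  show "\<not> is_node (Dx D k) (0, int k)" using a1 a2 a3 s0
    by (cases "D (0, int k - 1)") (auto simp: is_node_iff node3_def)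
qed

lemma compR:
  assumes "D (int k, 0) = Zero"
  shows "is_node D (int k, 0) \<and> \<not> is_node (Dx D k) (int k, 0)"
proof
  have m: "D (int k, -1) = Zero" using nonneg_D[of "(int k, -1)"] by auto
  show "is_node D (int k, 0)" using assms m sk by (cases "D (int k - 1, 0)") (auto simp: is_node_iff node3_def)
  obtain i where i: "0 \<le> i" "i \<le> int k" "D (i, int k - i) \<noteq> Zero" using ex by blast
  have "i \<noteq> int k" using i assms by auto
  then have nL: "\<not> Lft D k (int k)" using i by (auto simp: Lft_def)
  have a1: "Dx D k (int k, 0) = ng (D (int k - 1, 0))"
    using assms nL by (simp add: Dx_def absm_def fillv_def)
  have a2: "Dx D k (int k, -1) = Zero" using m by (simp add: Dx_def)
  have a3: "Dx D k (int k - 1, 0) = D (int k - 1, 0)" using sk by (simp add: Dx_def)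
  show "\<not> is_node (Dx D k) (int k, 0)" using a1 a2 a3 sk
    by (cases "D (int k - 1, 0)") (auto simp: is_node_iff node3_def)
qed

lemma count: "num_nodes (Dx D k) \<le> num_nodes D"
proof -
  let ?A = "{a. is_node D a}"
  let ?B = "{a. is_node (Dx D k) a}"
  define h where "h = (\<lambda>m::int\<times>int. if fst m = 0 then (0, snd m + 1) else (fst m + 1, snd m))"
  have fA: "finite ?A" using nd finite_nodes by (auto simp: newton_diagram_def)
  have fB: "finite ?B" using finite_nodes fsuppDx by blast
  have sub: "?B - ?A \<subseteq> h ` (?A - ?B)"
  proof
    fix a assume "a \<in> ?B - ?A"
    then have "(a = (0, int k + 1) \<and> D (0, int k) = Zero) \<or> (a = (int k + 1, 0) \<and> D (int k, 0) = Zero)"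
      using key by auto
    then show "a \<in> h ` (?A - ?B)"
    proof (elim disjE conjE)
      assume "a = (0, int k + 1)" "D (0, int k) = Zero"
      then show ?thesis using compL by (intro rev_image_eqI[of "(0, int k)"]) (auto simp: h_def)
    next
      assume "a = (int k + 1, 0)" "D (int k, 0) = Zero"
      then show ?thesis using compR k1 by (intro rev_image_eqI[of "(int k, 0)"]) (auto simp: h_def)
    qed
  qed
  have "card ?B = card (?B \<inter> ?A) + card (?B - ?A)" using fB by (rule card_Int_Diff)
  also have "card (?B - ?A) \<le> card (h ` (?A - ?B))" using sub fA by (intro card_mono) auto
  also have "card (h ` (?A - ?B)) \<le> card (?A - ?B)" using fA by (intro card_image_le) auto
  also have "card (?B \<inter> ?A) = card (?A \<inter> ?B)" by (simp add: Int_commute)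
  also have "card (?A \<inter> ?B) + card (?A - ?B) = card ?A" using fA by (rule card_Int_Diff[symmetric])
  finally show ?thesis by (simp add: num_nodes_def)
qed

end

theorem mainTheorem6:
  fixes D :: diagram and d :: int and k :: nat
  assumes "newton_diagram D"
    and "size_of (supp D) = d"
    and "connected_set (supp D)"
    and "(0, 0) \<in> supp D"
    and "int k < d"
    and "\<forall>m. fst m \<ge> 0 \<and> snd m \<ge> 0 \<and> absm m \<le> int k - 1 \<longrightarrow> m \<in> supp D"
  shows "\<exists>D'. extension D' D \<and> num_nodes D' \<le> num_nodes D \<and>
           (\<forall>m. fst m \<ge> 0 \<and> snd m \<ge> 0 \<and> absm m \<le> int k \<longrightarrow> m \<in> supp D')"
proof (cases "k = 0")
  case True
  have "\<forall>m. fst m \<ge> 0 \<and> snd m \<ge> 0 \<and> absm m \<le> int k \<longrightarrow> m \<in> supp D"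
  proof (intro allI impI)
    fix m :: "int \<times> int" assume "fst m \<ge> 0 \<and> snd m \<ge> 0 \<and> absm m \<le> int k"
    then have "m = (0,0)" using True by (cases m) (auto simp: absm_def)
    then show "m \<in> supp D" using assms(4) by simp
  qed
  then show ?thesis using assms(1) by (intro exI[of _ D]) (auto simp: extension_def)
next
  case False
  hence k1: "1 \<le> k" by simp
  have ex: "\<exists>i. 0 \<le> i \<and> i \<le> int k \<and> D (i, int k - i) \<noteq> Zero"
    using layer_exists[OF assms(1-5)] .
  note nn = nonneg_D[OF assms(1) k1 assms(6) ex]
  have agree: "\<forall>m \<in> supp D. Dx D k m = D m" by (auto simp: Dx_def supp_def)
  have ssub: "supp D \<subseteq> supp (Dx D k)" by (auto simp: Dx_def supp_def)
  have nd': "newton_diagram (Dx D k)"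
    unfolding newton_diagram_def
  proof (intro conjI)
    show "finite (supp (Dx D k))" using fsuppDx[OF assms(1) k1 assms(6) ex] .
    show "supp (Dx D k) \<noteq> {}" using ssub assms(4) by auto
    show "\<forall>m\<in>supp (Dx D k). 0 \<le> fst m \<and> 0 \<le> snd m"
      using nn by (auto simp: Dx_def supp_def split: if_splits)
  qed
  have cov: "\<forall>m. fst m \<ge> 0 \<and> snd m \<ge> 0 \<and> absm m \<le> int k \<longrightarrow> m \<in> supp (Dx D k)"
  proof (intro allI impI)
    fix m :: "int \<times> int" assume h: "fst m \<ge> 0 \<and> snd m \<ge> 0 \<and> absm m \<le> int k"
    show "m \<in> supp (Dx D k)"
    proof (cases "D m = Zero")
      case True
      then have "m \<notin> supp D" by (simp add: supp_def)
      then have "absm m = int k" using h assms(6) by force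
      then show ?thesis using True h fill_nz[OF assms(1) k1 assms(6) ex]
        by (simp add: Dx_def supp_def)
    next
      case False
      then show ?thesis using ssub by (auto simp: supp_def)
    qed
  qed
  show ?thesis
    using nd' ssub agree cov count[OF assms(1) k1 assms(6) ex]
    by (intro exI[of _ "Dx D k"]) (auto simp: extension_def)
qed

end
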